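(* Let $H^*$ be a graph and let $A, B \subseteq V(H^* )$ be disjoint sets such that every vertex of $A$ is isolated in $H^*$ and $B$ has the robust sapphire property for $H^*$. Let $F \subseteq \{ab \colon a \in A, b \in B\}$ and $H \coloneqq (V(H^* ), E(H^* ) \cup F)$. Let $B_{=1} \coloneqq \{b \in B \colon |N_H(b) \cap A| =1\}$, $A' \coloneqq \{a \in A \colon d_H(a) \geq 4,\ N_H(a) \subseteq B_{=1}\}$, and $B' \coloneqq N_H(A \setminus A')$. Then $(S(H^* ) \setminus B') \cup A' \subseteq S(H)$. In addition, $B \setminus N_H(A)$ has the robust sapphire property for $H$.
   Context: For a graph $G$ and $X\subseteq V(G)$, $N_G(X)=\{x\in V(G)\setminus X: xy\in E(G)\text{ for some }y\in X\}$ (external neighbourhood), $N_G(x)=N_G(\{x\})$, $d_G(x)$ is the degree and $\mathrm{dist}_G$ is graph distance. The strong $4$-core $S(G)$ is the maximal set $X\subseteq V(G)$ such that $|N_G(x)\cap X|\geq 4$ for every $x\in X\cup N_G(X)$ (well-defined since the union of two such sets is again such a set). A set $B\subseteq V(G)$ has the robust sapphire property for $G$ if (RS1) for every $x\in B\cup N_G(B)$ we have $\{x\}\cup N_G(x)\subseteq S(G)$ and $d_G(x)\ge 5$; and (RS2) for all distinct $b_1,b_2\in B$, $\mathrm{dist}_G(b_1,b_2)\geq 5$. *)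

theory Defs
  imports Main "HOL-Library.Extended_Nat"
begin

definition graph :: "'a set \<Rightarrow> 'a set set \<Rightarrow> bool" where
  "graph V E \<longleftrightarrow> finite V \<and> (\<forall>e\<in>E. e \<subseteq> V \<and> card e = 2)"

definition nbhd :: "'a set \<Rightarrow> 'a set set \<Rightarrow> 'a set \<Rightarrow> 'a set" where
  "nbhd V E X = {x \<in> V - X. \<exists>y\<in>X. {x, y} \<in> E}"

definition degree :: "'a set \<Rightarrow> 'a set set \<Rightarrow> 'a \<Rightarrow> nat" where
  "degree V E x = card (nbhd V E {x})"

definition walk :: "'a set \<Rightarrow> 'a set set \<Rightarrow> 'a list \<Rightarrow> bool" where
  "walk V E p \<longleftrightarrow> p \<noteq> [] \<and> set p \<subseteq> V \<and>
     (\<forall>i < length p - 1. {p ! i, p ! Suc i} \<in> E)"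

text \<open>Graph distance (infinite if no path exists).\<close>
definition dist :: "'a set \<Rightarrow> 'a set set \<Rightarrow> 'a \<Rightarrow> 'a \<Rightarrow> enat" where
  "dist V E x y = Inf {enat (length p - 1) | p. walk V E p \<and> hd p = x \<and> last p = y}"

text \<open>Strong 4-core: the maximal (= union of all) sets X with
  |N(x) \<inter> X| \<ge> 4 for all x in X \<union> N(X).\<close>
definition strong4 :: "'a set \<Rightarrow> 'a set set \<Rightarrow> 'a set \<Rightarrow> bool" where
  "strong4 V E X \<longleftrightarrow> X \<subseteq> V \<and>
     (\<forall>x \<in> X \<union> nbhd V E X. card (nbhd V E {x} \<inter> X) \<ge> 4)"

definition strong_core :: "'a set \<Rightarrow> 'a set set \<Rightarrow> 'a set" where
  "strong_core V E = \<Union> {X. strong4 V E X}"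

definition robust_sapphire :: "'a set \<Rightarrow> 'a set set \<Rightarrow> 'a set \<Rightarrow> bool" where
  "robust_sapphire V E B \<longleftrightarrow> B \<subseteq> V \<and>
     (\<forall>x \<in> B \<union> nbhd V E B. insert x (nbhd V E {x}) \<subseteq> strong_core V E \<and> degree V E x \<ge> 5) \<and>
     (\<forall>b1\<in>B. \<forall>b2\<in>B. b1 \<noteq> b2 \<longrightarrow> dist V E b1 b2 \<ge> 5)"

end

theory Submission
  imports Defs
begin

lemma core_mono: "strong4 V E X \<Longrightarrow> X \<subseteq> strong_core V E"
  unfolding strong_core_def by blast

lemma core_sub: "strong_core V E \<subseteq> V"
  unfolding strong_core_def strong4_def by blast

lemma core_prop:
  assumes "finite V" "x \<in> strong_core V E \<union> nbhd V E (strong_core V E)"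
  shows "card (nbhd V E {x} \<inter> strong_core V E) \<ge> 4"
proof -
  have "\<exists>X0. strong4 V E X0 \<and> x \<in> X0 \<union> nbhd V E X0"
  proof (cases "x \<in> strong_core V E")
    case True
    then show ?thesis unfolding strong_core_def by blast
  next
    case False
    with assms(2) obtain y where y: "y \<in> strong_core V E" "{x,y} \<in> E" "x \<in> V"
      unfolding nbhd_def by blast
    then obtain X0 where "strong4 V E X0" "y \<in> X0" unfolding strong_core_def by blast
    moreover have "x \<notin> X0" using False \<open>strong4 V E X0\<close> core_mono by blast
    ultimately show ?thesis using y unfolding nbhd_def by blast
  qed
  then obtain X0 where X0: "strong4 V E X0" "x \<in> X0 \<union> nbhd V E X0" by blast
  then have "card (nbhd V E {x} \<inter> X0) \<ge> 4" unfolding strong4_def by blast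
  moreover have "card (nbhd V E {x} \<inter> X0) \<le> card (nbhd V E {x} \<inter> strong_core V E)"
    apply (rule card_mono)
    using assms(1) apply (simp add: nbhd_def)
    using X0(1) core_mono by blast
  ultimately show ?thesis by linarith
qed

lemma dist_le:
  "walk V E p \<Longrightarrow> hd p = x \<Longrightarrow> last p = y \<Longrightarrow> dist V E x y \<le> enat (length p - 1)"
  unfolding dist_def by (rule Inf_lower) blast

lemma distB:
  assumes g: "graph V E" and d: "dist V E b1 b2 \<ge> 5" and b: "b1 \<in> V" "b2 \<in> V"
  shows "{b1,b2} \<notin> E" and "\<not> ({b1,x} \<in> E \<and> {x,b2} \<in> E)"
proof -
show "{b1,b2} \<notin> E"
proof
  assume e: "{b1,b2} \<in> E"
  have "walk V E [b1,b2]" using e b unfolding walk_def by (auto simp: less_Suc_eq)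
  from dist_le[OF this] have "dist V E b1 b2 \<le> enat 1" by simp
  with d have "enat 5 \<le> enat 1" by (metis numeral_eq_enat order_trans)
  then show False by simp
qed
show "\<not> ({b1,x} \<in> E \<and> {x,b2} \<in> E)"
proof
  assume e: "{b1,x} \<in> E \<and> {x,b2} \<in> E"
  then have "x \<in> V" using g unfolding graph_def by blast
  have w3: "walk V E [b1,x,b2]" using e b \<open>x \<in> V\<close> unfolding walk_def
    by (auto simp: less_Suc_eq nth_Cons split: nat.splits)
  have "dist V E b1 b2 \<le> enat 2" using dist_le[OF w3, of b1 b2] by (simp add: eval_nat_numeral)
  with d have "enat 5 \<le> enat 2" by (metis numeral_eq_enat order_trans)
  then show False by simp
qed
qed

theorem proposition6p5:
  fixes V :: "'a set" and Es :: "'a set set" and A B :: "'a set" and F :: "'a set set"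
  assumes "graph V Es"
    and "A \<subseteq> V" and "B \<subseteq> V" and "A \<inter> B = {}"
    and "\<forall>a\<in>A. nbhd V Es {a} = {}"
    and "robust_sapphire V Es B"
    and "F \<subseteq> {{a, b} | a b. a \<in> A \<and> b \<in> B}"
  defines "EH \<equiv> Es \<union> F"
  defines "B1 \<equiv> {b \<in> B. card (nbhd V EH {b} \<inter> A) = 1}"
  defines "A' \<equiv> {a \<in> A. degree V EH a \<ge> 4 \<and> nbhd V EH {a} \<subseteq> B1}"
  defines "B' \<equiv> nbhd V EH (A - A')"
  shows "(strong_core V Es - B') \<union> A' \<subseteq> strong_core V EH
         \<and> robust_sapphire V EH (B - nbhd V EH A)"
proof -
  note g = assms(1)
  have finV: "finite V" using g unfolding graph_def by blast
  have Eg: "\<And>u v. {u,v} \<in> Es \<Longrightarrow> u \<in> V \<and> v \<in> V \<and> u \<noteq> v"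
    using g unfolding graph_def by fastforce
  define S where "S = strong_core V Es"
  have RS1: "\<And>x. x \<in> B \<union> nbhd V Es B \<Longrightarrow> insert x (nbhd V Es {x}) \<subseteq> S \<and> degree V Es x \<ge> 5"
    using assms(6) unfolding robust_sapphire_def S_def by blast
  have RS2: "\<And>b1 b2. b1 \<in> B \<Longrightarrow> b2 \<in> B \<Longrightarrow> b1 \<noteq> b2 \<Longrightarrow> dist V Es b1 b2 \<ge> 5"
    using assms(6) unfolding robust_sapphire_def by blast
  have nB1: "\<And>b1 b2. b1 \<in> B \<Longrightarrow> b2 \<in> B \<Longrightarrow> b1 \<noteq> b2 \<Longrightarrow> {b1,b2} \<notin> Es"
    using distB(1)[OF g RS2] assms(3) by blast
  have nB2: "\<And>b1 b2 x. b1 \<in> B \<Longrightarrow> b2 \<in> B \<Longrightarrow> b1 \<noteq> b2 \<Longrightarrow> {b1,x} \<in> Es \<Longrightarrow> {x,b2} \<notin> Es"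
    using distB(2)[OF g RS2] assms(3) by blast
  have nE: "\<And>a y. a \<in> A \<Longrightarrow> {a,y} \<notin> Es"
  proof
    fix a y assume a: "a \<in> A" and e: "{a,y} \<in> Es"
    then have "y \<in> nbhd V Es {a}" using Eg[OF e] unfolding nbhd_def by (auto simp: insert_commute)
    with assms(5) a show False by blast
  qed
  have Fe: "\<And>u v. {u,v} \<in> F \<Longrightarrow> (u \<in> A \<and> v \<in> B) \<or> (u \<in> B \<and> v \<in> A)"
    using assms(7) by (auto simp: doubleton_eq_iff)
  have EHA: "\<And>u v. {u,v} \<in> EH \<Longrightarrow> u \<in> A \<Longrightarrow> v \<in> B \<and> {u,v} \<in> F"
    using Fe nE assms(4) unfolding EH_def by blast
  have EHV: "\<And>u v. {u,v} \<in> EH \<Longrightarrow> u \<in> V \<and> v \<in> V \<and> u \<noteq> v"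
    using Eg Fe assms(2,3,4) unfolding EH_def by blast
  have BS: "B \<subseteq> S" using RS1 by blast
  have AS: "A \<inter> S = {}"
  proof (rule ccontr)
    assume "A \<inter> S \<noteq> {}"
    then obtain a where a: "a \<in> A" "a \<in> S" by blast
    then have "card (nbhd V Es {a} \<inter> S) \<ge> 4" using core_prop[OF finV] unfolding S_def by blast
    with assms(5) a show False by simp
  qed
  have SV: "S \<subseteq> V" unfolding S_def by (rule core_sub)
  have B'B: "\<And>z. z \<in> B' \<Longrightarrow> z \<in> B \<and> z \<in> nbhd V EH A"
  proof -
    fix z assume "z \<in> B'"
    then obtain a where a: "a \<in> A" "a \<notin> A'" "{z,a} \<in> EH" "z \<in> V" unfolding B'_def nbhd_def by blast
    then have "z \<in> B" using EHA[of a z] by (auto simp: insert_commute)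
    then show "z \<in> B \<and> z \<in> nbhd V EH A" using a assms(4) unfolding nbhd_def by blast
  qed
  define X where "X = (S - B') \<union> A'"
  have XV: "X \<subseteq> V" using SV assms(2) unfolding X_def A'_def by blast
  have part1: "X \<subseteq> strong_core V EH"
  proof (rule core_mono)
    show "strong4 V EH X" unfolding strong4_def
    proof (intro conjI ballI XV)
      fix x assume x: "x \<in> X \<union> nbhd V EH X"
      show "4 \<le> card (nbhd V EH {x} \<inter> X)"
      proof (cases "x \<in> A")
        case True
        have xA': "x \<in> A'"
        proof (cases "x \<in> X")
          case True
          then show ?thesis using \<open>x \<in> A\<close> AS unfolding X_def by blast
        next
          case False
          with x obtain y where y: "y \<in> X" "{x,y} \<in> EH" unfolding nbhd_def by (auto simp: insert_commute)
          then have yB: "y \<in> B" using EHA \<open>x \<in> A\<close> by blast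
          then have "y \<notin> A'" using assms(4) unfolding A'_def by blast
          with y have "y \<notin> B'" unfolding X_def by blast
          show ?thesis
          proof (rule ccontr)
            assume "x \<notin> A'"
            then have "y \<in> B'" unfolding B'_def nbhd_def using y EHV[OF y(2)] yB \<open>x \<in> A\<close> assms(4)
              by (auto simp: insert_commute)
            with \<open>y \<notin> B'\<close> show False by blast
          qed
        qed
        have "nbhd V EH {x} \<subseteq> X"
        proof
          fix y assume y: "y \<in> nbhd V EH {x}"
          then have yB1: "y \<in> B1" using xA' unfolding A'_def by blast
          then have yB: "y \<in> B" unfolding B1_def by blast
          have "y \<notin> B'"
          proof
            assume "y \<in> B'"
            then obtain a where a: "a \<in> A" "a \<notin> A'" "{y,a} \<in> EH" unfolding B'_def nbhd_def by blast
            have c1: "card (nbhd V EH {y} \<inter> A) = 1" using yB1 unfolding B1_def by blast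
            have "a \<in> nbhd V EH {y} \<inter> A" using a EHV[OF a(3)] unfolding nbhd_def by (auto simp: insert_commute)
            moreover have "x \<in> nbhd V EH {y} \<inter> A" using y \<open>x \<in> A\<close> EHV[of y x] unfolding nbhd_def
              by (auto simp: insert_commute)
            ultimately have "a = x" using c1 by (metis card_1_singletonE singletonD)
            with a xA' show False by blast
          qed
          then show "y \<in> X" using yB BS unfolding X_def by blast
        qed
        then have "nbhd V EH {x} \<inter> X = nbhd V EH {x}" by blast
        then show ?thesis using xA' unfolding A'_def degree_def by simp
      next
        case False
        have xS: "x \<in> S \<union> nbhd V Es S"
        proof (cases "x \<in> X")
          case True
          then show ?thesis using False unfolding X_def A'_def by blast
        next
          case nX: False
          with x obtain y where y: "y \<in> X" "{x,y} \<in> EH" "x \<in> V" unfolding nbhd_def by blast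
          show ?thesis
          proof (cases "{x,y} \<in> Es")
            case True
            then have "y \<notin> A" using nE by (metis insert_commute)
            then have "y \<in> S" using y unfolding X_def A'_def by blast
            then show ?thesis using True y unfolding nbhd_def by blast
          next
            case nE2: False
            then have "{x,y} \<in> F" using y unfolding EH_def by blast
            then have "x \<in> B" using Fe False by blast
            then show ?thesis using BS by blast
          qed
        qed
        have c4: "card (nbhd V Es {x} \<inter> S) \<ge> 4" using core_prop[OF finV] xS unfolding S_def by blast
        have sub: "nbhd V Es {x} \<subseteq> nbhd V EH {x}" unfolding nbhd_def EH_def by blast
        have finH: "finite (nbhd V EH {x} \<inter> X)" using finV unfolding nbhd_def by simp
        show ?thesis
        proof (cases "\<exists>y \<in> nbhd V Es {x}. y \<in> B'")
          case False
          then have "nbhd V Es {x} \<inter> S \<subseteq> nbhd V EH {x} \<inter> X" using sub unfolding X_def by blast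
          from card_mono[OF finH this] c4 show ?thesis by linarith
        next
          case True
          then obtain y where y: "y \<in> nbhd V Es {x}" "y \<in> B'" by blast
          then have yB: "y \<in> B" using B'B by blast
          have ye: "{x,y} \<in> Es" "x \<noteq> y" using y(1) unfolding nbhd_def by (auto simp: insert_commute)
          have "x \<in> B \<union> nbhd V Es B"
            using ye yB Eg[OF ye(1)] unfolding nbhd_def by blast
          from RS1[OF this] have r: "nbhd V Es {x} \<subseteq> S" "card (nbhd V Es {x}) \<ge> 5"
            unfolding degree_def by auto
          have one: "nbhd V Es {x} \<inter> B' \<subseteq> {y}"
          proof
            fix z assume z: "z \<in> nbhd V Es {x} \<inter> B'"
            then have zB: "z \<in> B" using B'B by blast
            have "{z,x} \<in> Es" using z unfolding nbhd_def by blast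
            moreover have "{x,y} \<in> Es" by (rule ye(1))
            ultimately show "z \<in> {y}" using nB2[OF zB yB] by blast
          qed
          have "nbhd V Es {x} - {y} \<subseteq> nbhd V EH {x} \<inter> X" using one r(1) sub unfolding X_def by blast
          from card_mono[OF finH this] have "card (nbhd V Es {x} - {y}) \<le> card (nbhd V EH {x} \<inter> X)" .
          moreover have "card (nbhd V Es {x} - {y}) = card (nbhd V Es {x}) - 1"
            using y(1) by (simp add: card_Diff_singleton)
          ultimately show ?thesis using r(2) by linarith
        qed
      qed
    qed
  qed
  define B0 where "B0 = B - nbhd V EH A"
  have B0E: "\<And>b z. b \<in> B0 \<Longrightarrow> {b,z} \<in> EH \<Longrightarrow> {b,z} \<in> Es"
  proof -
    fix b z assume b: "b \<in> B0" and e: "{b,z} \<in> EH"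
    show "{b,z} \<in> Es"
    proof (rule ccontr)
      assume "{b,z} \<notin> Es"
      then have "{b,z} \<in> F" using e unfolding EH_def by blast
      then have "z \<in> A" using Fe b assms(4) unfolding B0_def by blast
      then have "b \<in> nbhd V EH A" using e EHV[OF e] b assms(4) unfolding nbhd_def B0_def
        by (auto simp: insert_commute)
      with b show False unfolding B0_def by blast
    qed
  qed
  have part2: "robust_sapphire V EH B0"
    unfolding robust_sapphire_def
  proof (intro conjI ballI impI)
    show "B0 \<subseteq> V" using assms(3) unfolding B0_def by blast
  next
    fix x assume x: "x \<in> B0 \<union> nbhd V EH B0"
    have P: "\<And>y. {x,y} \<in> EH \<Longrightarrow> {x,y} \<in> Es" and xB: "x \<in> B \<union> nbhd V Es B"
      and nB': "insert x (nbhd V Es {x}) \<inter> B' = {}"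
    proof -
      have "(\<forall>y. {x,y} \<in> EH \<longrightarrow> {x,y} \<in> Es) \<and> x \<in> B \<union> nbhd V Es B \<and> insert x (nbhd V Es {x}) \<inter> B' = {}"
      proof (cases "x \<in> B0")
        case True
        have "insert x (nbhd V Es {x}) \<inter> B' = {}"
        proof -
          have "x \<notin> B'" using True B'B unfolding B0_def by blast
          moreover have "\<And>y. y \<in> nbhd V Es {x} \<Longrightarrow> y \<notin> B'"
          proof
            fix y assume y: "y \<in> nbhd V Es {x}" "y \<in> B'"
            then have "y \<in> B" "{y,x} \<in> Es" "y \<noteq> x" using B'B unfolding nbhd_def by auto
            then show False using nB1 True unfolding B0_def by blast
          qed
          ultimately show ?thesis by blast
        qed
        then show ?thesis using True B0E unfolding B0_def by blast
      next
        case False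
        with x obtain b where b: "b \<in> B0" "{x,b} \<in> EH" "x \<in> V" unfolding nbhd_def by blast
        have xbE: "{x,b} \<in> Es" using B0E[OF b(1), of x] b(2) by (simp add: insert_commute)
        have xnA: "x \<notin> A" using nE xbE by blast
        have xnB: "x \<notin> B"
        proof
          assume "x \<in> B"
          moreover have "x \<noteq> b" using Eg[OF xbE] by blast
          ultimately show False using nB1 xbE b(1) unfolding B0_def by blast
        qed
        have "\<forall>y. {x,y} \<in> EH \<longrightarrow> {x,y} \<in> Es" using Fe xnA xnB unfolding EH_def by blast
        moreover have "x \<in> B \<union> nbhd V Es B" using xbE b xnB unfolding nbhd_def B0_def by blast
        moreover have "insert x (nbhd V Es {x}) \<inter> B' = {}"
        proof -
          have "x \<notin> B'" using xnB B'B by blast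
          moreover have "\<And>y. y \<in> nbhd V Es {x} \<Longrightarrow> y \<notin> B'"
          proof
            fix y assume y: "y \<in> nbhd V Es {x}" "y \<in> B'"
            then have yy: "y \<in> B" "{y,x} \<in> Es" "y \<in> nbhd V EH A" using B'B unfolding nbhd_def by auto
            then have "y \<noteq> b" using b(1) unfolding B0_def by blast
            then show False using nB2[of y b x] yy xbE b(1) unfolding B0_def by (auto simp: insert_commute)
          qed
          ultimately show ?thesis by blast
        qed
        ultimately show ?thesis by blast
      qed
      then show "\<And>y. {x,y} \<in> EH \<Longrightarrow> {x,y} \<in> Es" "x \<in> B \<union> nbhd V Es B"
        "insert x (nbhd V Es {x}) \<inter> B' = {}" by auto
    qed
    have nbeq: "nbhd V EH {x} = nbhd V Es {x}"
      using P unfolding nbhd_def EH_def by (auto simp: insert_commute)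
    from RS1[OF xB] have r: "insert x (nbhd V Es {x}) \<subseteq> S" "degree V Es x \<ge> 5" by auto
    have "insert x (nbhd V EH {x}) \<subseteq> X" using r(1) nB' nbeq unfolding X_def by blast
    then show "insert x (nbhd V EH {x}) \<subseteq> strong_core V EH" using part1 by blast
    show "degree V EH x \<ge> 5" using r(2) nbeq unfolding degree_def by simp
  next
    fix b1 b2 assume b1: "b1 \<in> B0" and b2: "b2 \<in> B0" and ne: "b1 \<noteq> b2"
    show "dist V EH b1 b2 \<ge> 5" unfolding dist_def
    proof (rule Inf_greatest, clarify)
      fix p assume w: "walk V EH p" and h: "b1 = hd p" and l: "b2 = last p"
      show "5 \<le> enat (length p - 1)"
      proof (rule ccontr)
        assume short: "\<not> 5 \<le> enat (length p - 1)"
        then have sl: "length p - 1 < 5" by (simp add: numeral_eq_enat)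
        have pne: "p \<noteq> []" using w unfolding walk_def by blast
        have p0: "p ! 0 = b1" using h pne by (simp add: hd_conv_nth)
        have pl: "p ! (length p - 1) = b2" using l pne by (simp add: last_conv_nth)
        have edges: "\<And>i. i < length p - 1 \<Longrightarrow> {p!i, p!Suc i} \<in> EH" using w unfolding walk_def by blast
        show False
        proof (cases "\<forall>i < length p - 1. {p!i, p!Suc i} \<in> Es")
          case True
          then have "walk V Es p" using w unfolding walk_def by blast
          from dist_le[OF this h[symmetric] l[symmetric]] have "dist V Es b1 b2 \<le> enat (length p - 1)" .
          moreover have "dist V Es b1 b2 \<ge> 5" using RS2 b1 b2 ne unfolding B0_def by blast
          ultimately show False using short by (meson order_trans)
        next
          case False
          then obtain i where i: "i < length p - 1" "{p!i, p!Suc i} \<notin> Es" by blast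
          then have "{p!i, p!Suc i} \<in> F" using edges[OF i(1)] unfolding EH_def by blast
          then have "\<exists>j < length p. p ! j \<in> A" using Fe i(1) by (metis Suc_lessI less_diff_conv add_lessD1 less_SucI Suc_eq_plus1)
          then obtain j where j: "j < length p" "p ! j \<in> A" by blast
          have "j \<noteq> 0" using j p0 b1 assms(4) unfolding B0_def by auto
          moreover have "j \<noteq> length p - 1" using j pl b2 assms(4) unfolding B0_def by auto
          ultimately have j1: "0 < j" "j < length p - 1" using j(1) by auto
          have e1: "{p!j, p!(j-1)} \<in> EH" using edges[of "j-1"] j1 by (simp add: insert_commute)
          have e2: "{p!j, p!Suc j} \<in> EH" using edges[of j] j1 by simp
          have n1: "p!(j-1) \<in> nbhd V EH A" "p!(j-1) \<in> B"
          proof -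
            have "{p!(j-1), p!j} \<in> EH" using e1 by (simp add: insert_commute)
            then show "p!(j-1) \<in> nbhd V EH A" "p!(j-1) \<in> B"
              using EHA[OF e1 j(2)] EHV[OF e1] j(2) assms(4) unfolding nbhd_def by blast+
          qed
          have n2: "p!Suc j \<in> nbhd V EH A"
          proof -
            have "{p!Suc j, p!j} \<in> EH" using e2 by (simp add: insert_commute)
            then show ?thesis
              using EHA[OF e2 j(2)] EHV[OF e2] j(2) assms(4) unfolding nbhd_def by blast
          qed
          have "j - 1 \<noteq> 0" using n1 p0 b1 unfolding B0_def by auto
          moreover have "Suc j \<noteq> length p - 1" using n2 pl b2 unfolding B0_def by auto
          ultimately have "j = 2" using j1 sl by linarith
          have e0: "{p!0, p!1} \<in> EH" using edges[of 0] j1 by simp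
          have "{b1, p!1} \<in> Es" using B0E[OF b1] e0 p0 by simp
          moreover have "p!1 \<in> B" "p!1 \<noteq> b1" using n1 \<open>j = 2\<close> p0 b1 unfolding B0_def by auto
          ultimately show False using nB1 b1 unfolding B0_def by blast
        qed
      qed
    qed
  qed
  show ?thesis using part1 part2 unfolding X_def S_def B0_def by blast
qed

end
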